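(* Let $c\in\mathbb{R}\setminus\{0\}$, $b>0$, $d\ge1$, $\Delta t,\Delta x>0$, and let $X=(\mathbb{R}/(b/c)\mathbb{Z})\times(\mathbb{R}/b\mathbb{Z})$ be the torus with coordinates $(t,x)$. Let $W=C^1(X,\mathbb{R}^d)$ and $\Sigma=\{u\in W\mid u(t+s,x+cs)=u(t,x)\ \text{for all } s\in\mathbb{R},(t,x)\in X\}$ the travelling waves with wave speed $c$. Let $L_d\colon(\mathbb{R}^d)^3\to\mathbb{R}$ be an (autonomous) discrete Lagrangian density such that $S\colon W\to\mathbb{R}$, $$S(u)=\int_X L_d\big(u(t,x),u(t+\Delta t,x),u(t,x+\Delta x)\big)\,\mathrm{d}x\,\mathrm{d}t,$$ is continuously differentiable, and let $S_\Sigma$ denote the restriction of $S$ to $\Sigma$. Then a travelling wave $u\in\Sigma$ is a stationary point of $S$ if and only if $u$ is a stationary point of $S_\Sigma$.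
   Context: Arguments $t+\Delta t$, $x+\Delta x$ are taken modulo the periods of the torus. A stationary point of $S$ (resp. $S_\Sigma$) is a point where the derivative of $S$ vanishes in all directions of $W$ (resp. all directions in the linear subspace $\Sigma$). *)

theory Defs
  imports "HOL-Analysis.Analysis"
begin

text \<open>Functions on the torus X = (R/(b/c)Z) x (R/bZ) are represented as
  doubly periodic functions on R x R (coordinates (t,x)).\<close>

definition torus_periodic :: "real \<Rightarrow> real \<Rightarrow> (real \<times> real \<Rightarrow> 'a) \<Rightarrow> bool" where
  "torus_periodic b c u \<longleftrightarrow>
     (\<forall>t x. u (t + b / c, x) = u (t, x) \<and> u (t, x + b) = u (t, x))"

definition C1_map :: "(real \<times> real \<Rightarrow> real ^ 'd) \<Rightarrow> bool" where
  "C1_map u \<longleftrightarrow>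
     (\<exists>D. (\<forall>z. (u has_derivative D z) (at z)) \<and>
          continuous_on UNIV (\<lambda>z. D z (1, 0)) \<and>
          continuous_on UNIV (\<lambda>z. D z (0, 1)))"

definition W_space :: "real \<Rightarrow> real \<Rightarrow> (real \<times> real \<Rightarrow> real ^ 'd) set" where
  "W_space b c = {u. torus_periodic b c u \<and> C1_map u}"

definition Sigma_space :: "real \<Rightarrow> real \<Rightarrow> (real \<times> real \<Rightarrow> real ^ 'd) set" where
  "Sigma_space b c = {u \<in> W_space b c. \<forall>s t x. u (t + s, x + c * s) = u (t, x)}"

definition C1_norm :: "(real \<times> real \<Rightarrow> real ^ 'd) \<Rightarrow> real" where
  "C1_norm u = Sup (range (\<lambda>z. norm (u z)))
              + Sup (range (\<lambda>z. norm (frechet_derivative u (at z) (1, 0))))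
              + Sup (range (\<lambda>z. norm (frechet_derivative u (at z) (0, 1))))"

definition discrete_action ::
  "real \<Rightarrow> real \<Rightarrow> real \<Rightarrow> real \<Rightarrow> (real ^ 'd \<Rightarrow> real ^ 'd \<Rightarrow> real ^ 'd \<Rightarrow> real)
     \<Rightarrow> (real \<times> real \<Rightarrow> real ^ 'd) \<Rightarrow> real" where
  "discrete_action b c dt dx L u =
     integral (cbox (0, 0) (\<bar>b / c\<bar>, b))
       (\<lambda>(t, x). L (u (t, x)) (u (t + dt, x)) (u (t, x + dx)))"

definition C1_functional_on ::
  "(real \<times> real \<Rightarrow> real ^ 'd) set \<Rightarrow> ((real \<times> real \<Rightarrow> real ^ 'd) \<Rightarrow> real) \<Rightarrow> bool" where
  "C1_functional_on V S \<longleftrightarrow>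
     (\<exists>DS. (\<forall>u\<in>V.
               (\<forall>h\<in>V. \<forall>k\<in>V. DS u (\<lambda>z. h z + k z) = DS u h + DS u k) \<and>
               (\<forall>h\<in>V. \<forall>r. DS u (\<lambda>z. r *\<^sub>R h z) = r * DS u h) \<and>
               (\<exists>K. \<forall>h\<in>V. \<bar>DS u h\<bar> \<le> K * C1_norm h)) \<and>
            (\<forall>u\<in>V. \<forall>e>0. \<exists>\<delta>>0. \<forall>h\<in>V. C1_norm h < \<delta> \<longrightarrow>
               \<bar>S (\<lambda>z. u z + h z) - S u - DS u h\<bar> \<le> e * C1_norm h) \<and>
            (\<forall>u\<in>V. \<forall>e>0. \<exists>\<delta>>0. \<forall>u'\<in>V. C1_norm (\<lambda>z. u' z - u z) < \<delta> \<longrightarrow>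
               (\<forall>h\<in>V. \<bar>DS u' h - DS u h\<bar> \<le> e * C1_norm h)))"

definition stationary_wrt ::
  "(real \<times> real \<Rightarrow> real ^ 'd) set \<Rightarrow> ((real \<times> real \<Rightarrow> real ^ 'd) \<Rightarrow> real)
     \<Rightarrow> (real \<times> real \<Rightarrow> real ^ 'd) \<Rightarrow> bool" where
  "stationary_wrt V S u \<longleftrightarrow>
     (\<forall>v\<in>V. ((\<lambda>\<epsilon>. S (\<lambda>z. u z + \<epsilon> *\<^sub>R v z)) has_real_derivative 0) (at 0))"

end

theory Submission
  imports Defs
begin


definition dp :: "real \<Rightarrow> real \<Rightarrow> (real \<times> real \<Rightarrow> 'a) \<Rightarrow> bool" where
  "dp p b f \<longleftrightarrow> (\<forall>z. f (z + (p, 0)) = f z \<and> f (z + (0, b)) = f z)"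

lemma periodic_nat:
  fixes a :: "'b::real_vector"
  assumes "\<And>z. f (z + a) = f z"
  shows "f (z + real n *\<^sub>R a) = f z"
proof (induction n)
  case 0 then show ?case by simp
next
  case (Suc n)
  have "z + real (Suc n) *\<^sub>R a = (z + real n *\<^sub>R a) + a" by (simp add: algebra_simps)
  then have "f (z + real (Suc n) *\<^sub>R a) = f (z + real n *\<^sub>R a)" using assms by metis
  then show ?case using Suc by simp
qed

lemma periodic_int:
  fixes a :: "'b::real_vector"
  assumes "\<And>z. f (z + a) = f z"
  shows "f (z + of_int m *\<^sub>R a) = f z"
proof (cases "m \<ge> 0")
  case True
  then obtain n where "m = int n" by (metis nonneg_eq_int)
  then show ?thesis using periodic_nat[of f a z n, OF assms] by simp
next
  case False
  define n where "n = nat (-m)"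
  have n: "m = - int n" using False unfolding n_def by simp
  have "f (z + of_int m *\<^sub>R a) = f ((z + of_int m *\<^sub>R a) + real n *\<^sub>R a)"
    using periodic_nat[of f a _ n, OF assms] by simp
  also have "(z + of_int m *\<^sub>R a) + real n *\<^sub>R a = z" using n by (simp add: algebra_simps)
  finally show ?thesis .
qed

lemma periodic_neg:
  fixes a :: "'b::real_vector"
  assumes "\<And>z. f (z + a) = f z"
  shows "f (z - a) = f z"
  using assms[of "z - a"] by simp

lemma dp_abs:
  assumes "dp p b f" shows "dp \<bar>p\<bar> b f"
proof (cases "p \<ge> 0")
  case True then show ?thesis using assms by simp
next
  case False
  have "f (z + (-p, 0)) = f z" for z
  proof -
    have "f (z - (p,0)) = f z" using assms unfolding dp_def by (intro periodic_neg) auto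
    moreover have "z - (p,0) = z + (-p,0)" by simp
    ultimately show ?thesis by simp
  qed
  then show ?thesis using assms False unfolding dp_def by simp
qed

lemma dp_reduce:
  assumes "dp q b f" "q > 0" "b > 0"
  shows "\<exists>s. (\<forall>w. f (w + s) = f w) \<and> z + s \<in> cbox (0,0) (q, b)"
proof -
  obtain t x where z: "z = (t, x)" by fastforce
  define m where "m = - floor (t / q)"
  define n where "n = - floor (x / b)"
  have p1: "\<And>y. f (y + (q,0)) = f y" and p2: "\<And>y. f (y + (0,b)) = f y" using assms(1) unfolding dp_def by blast+
  let ?s = "of_int m *\<^sub>R (q,0) + of_int n *\<^sub>R ((0,b)::real\<times>real)"
  have 1: "\<forall>w. f (w + ?s) = f w"
  proof
    fix w :: "real \<times> real"
    have "f (w + ?s) = f ((w + of_int m *\<^sub>R (q,0)) + of_int n *\<^sub>R (0,b))" by (simp add: add.assoc)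
    also have "\<dots> = f (w + of_int m *\<^sub>R (q,0))" by (rule periodic_int[of f "(0,b)", OF p2])
    also have "\<dots> = f w" by (rule periodic_int[of f "(q,0)", OF p1])
    finally show "f (w + ?s) = f w" .
  qed
  have a1: "of_int \<lfloor>t/q\<rfloor> * q \<le> t" "t < (of_int \<lfloor>t/q\<rfloor> + 1) * q"
    using floor_divide_lower floor_divide_upper assms(2) by auto
  have a2: "of_int \<lfloor>x/b\<rfloor> * b \<le> x" "x < (of_int \<lfloor>x/b\<rfloor> + 1) * b"
    using floor_divide_lower floor_divide_upper assms(3) by auto
  have m1: "of_int m * q = - (of_int \<lfloor>t/q\<rfloor> * q)" by (simp add: m_def)
  have n1: "of_int n * b = - (of_int \<lfloor>x/b\<rfloor> * b)" by (simp add: n_def)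
  have "t + of_int m * q \<ge> 0" "t + of_int m * q \<le> q"
    using a1 m1 by (simp_all add: algebra_simps)
  moreover have "x + of_int n * b \<ge> 0" "x + of_int n * b \<le> b"
    using a2 n1 by (simp_all add: algebra_simps)
  ultimately have "z + ?s \<in> cbox (0,0) (q,b)" using z by (simp add: cbox_Pair_eq)
  with 1 show ?thesis by blast
qed



lemma shift_fst_has_integral:
  fixes G :: "real \<times> real \<Rightarrow> real"
  assumes per: "\<And>z. G (z + (p,0)) = G z" and r: "0 \<le> r" "r \<le> p"
    and int: "(G has_integral I) (cbox (0,0) (p,B))"
  shows "((\<lambda>z. G (z + (r,0))) has_integral I) (cbox (0,0) (p,B))"
proof -
  define k :: "real \<times> real" where "k = (1,0)"
  have k: "k \<in> Basis" by (simp add: k_def Basis_prod_def)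
  have sp: "cbox (0,0) (p,B) \<inter> {x. x \<bullet> k \<le> m} = cbox (0,0) (m,B)"
    "cbox (0,0) (p,B) \<inter> {x. x \<bullet> k \<ge> m} = cbox (m,0) (p,B)" if "0 \<le> m" "m \<le> p" for m
    using that by (auto simp: k_def cbox_Pair_eq)
  have intG: "G integrable_on cbox (0,0) (p,B)" using int by blast
  define I1 where "I1 = integral (cbox (0,0) (r,B)) G"
  define I2 where "I2 = integral (cbox (r,0) (p,B)) G"
  have h1: "(G has_integral I1) (cbox (0,0) (r,B))"
    unfolding I1_def using integrable_split(1)[OF intG k, of r] sp[OF r] by (simp add: has_integral_integral)
  have h2: "(G has_integral I2) (cbox (r,0) (p,B))"
    unfolding I2_def using integrable_split(2)[OF intG k, of r] sp[OF r] by (simp add: has_integral_integral)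
  have "(G has_integral (I1 + I2)) (cbox (0,0) (p,B))"
    using has_integral_split[OF _ _ k, of G I1 "(0,0)" "(p,B)" r I2] h1 h2 sp[OF r] by simp
  then have I: "I = I1 + I2" using int has_integral_unique by blast
  have eqG: "(\<lambda>z. G (z + (r,0))) = G \<circ> (+) (r,0)" by (auto simp: add.commute)
  have A: "((\<lambda>z. G (z + (r,0))) has_integral I2) (cbox (0,0) (p - r,B))"
    unfolding eqG has_integral_shift_cbox_iff using h2 by simp
  have Gp: "G \<circ> (+) (p,0) = G" using per by (auto simp: add.commute)
  have "((G \<circ> (+) (p,0)) has_integral I1) (cbox (0,0) (r,B))" using Gp h1 by simp
  then have "(G has_integral I1) (cbox (p,0) (p + r,B))"
    unfolding has_integral_shift_cbox_iff by (simp add: add.commute)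
  then have Bp: "((\<lambda>z. G (z + (r,0))) has_integral I1) (cbox (p - r,0) (p,B))"
    unfolding eqG has_integral_shift_cbox_iff by (simp add: add.commute)
  have "((\<lambda>z. G (z + (r,0))) has_integral (I2 + I1)) (cbox (0,0) (p,B))"
    using has_integral_split[OF _ _ k, of "\<lambda>z. G (z + (r,0))" I2 "(0,0)" "(p,B)" "p - r" I1] A Bp
      sp[of "p - r"] r by simp
  then show ?thesis using I by (simp add: add.commute)
qed

lemma shift_snd_has_integral:
  fixes G :: "real \<times> real \<Rightarrow> real"
  assumes per: "\<And>z. G (z + (0,p)) = G z" and r: "0 \<le> r" "r \<le> p"
    and int: "(G has_integral I) (cbox (0,0) (B,p))"
  shows "((\<lambda>z. G (z + (0,r))) has_integral I) (cbox (0,0) (B,p))"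
proof -
  define k :: "real \<times> real" where "k = (0,1)"
  have k: "k \<in> Basis" by (simp add: k_def Basis_prod_def)
  have sp: "cbox (0,0) (B,p) \<inter> {x. x \<bullet> k \<le> m} = cbox (0,0) (B,m)"
    "cbox (0,0) (B,p) \<inter> {x. x \<bullet> k \<ge> m} = cbox (0,m) (B,p)" if "0 \<le> m" "m \<le> p" for m
    using that by (auto simp: k_def cbox_Pair_eq)
  have intG: "G integrable_on cbox (0,0) (B,p)" using int by blast
  define I1 where "I1 = integral (cbox (0,0) (B,r)) G"
  define I2 where "I2 = integral (cbox (0,r) (B,p)) G"
  have h1: "(G has_integral I1) (cbox (0,0) (B,r))"
    unfolding I1_def using integrable_split(1)[OF intG k, of r] sp[OF r] by (simp add: has_integral_integral)
  have h2: "(G has_integral I2) (cbox (0,r) (B,p))"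
    unfolding I2_def using integrable_split(2)[OF intG k, of r] sp[OF r] by (simp add: has_integral_integral)
  have "(G has_integral (I1 + I2)) (cbox (0,0) (B,p))"
    using has_integral_split[OF _ _ k, of G I1 "(0,0)" "(B,p)" r I2] h1 h2 sp[OF r] by simp
  then have I: "I = I1 + I2" using int has_integral_unique by blast
  have eqG: "(\<lambda>z. G (z + (0,r))) = G \<circ> (+) (0,r)" by (auto simp: add.commute)
  have A: "((\<lambda>z. G (z + (0,r))) has_integral I2) (cbox (0,0) (B,p - r))"
    unfolding eqG has_integral_shift_cbox_iff using h2 by simp
  have Gp: "G \<circ> (+) (0,p) = G" using per by (auto simp: add.commute)
  have "((G \<circ> (+) (0,p)) has_integral I1) (cbox (0,0) (B,r))" using Gp h1 by simp
  then have "(G has_integral I1) (cbox (0,p) (B,p + r))"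
    unfolding has_integral_shift_cbox_iff by (simp add: add.commute)
  then have Bp: "((\<lambda>z. G (z + (0,r))) has_integral I1) (cbox (0,p - r) (B,p))"
    unfolding eqG has_integral_shift_cbox_iff by (simp add: add.commute)
  have "((\<lambda>z. G (z + (0,r))) has_integral (I2 + I1)) (cbox (0,0) (B,p))"
    using has_integral_split[OF _ _ k, of "\<lambda>z. G (z + (0,r))" I2 "(0,0)" "(B,p)" "p - r" I1] A Bp
      sp[of "p - r"] r by simp
  then show ?thesis using I by (simp add: add.commute)
qed

lemma reduce_mod:
  fixes q a :: real
  assumes "q > 0"
  obtains r m where "0 \<le> r" "r \<le> q" "a = r + of_int m * q"
proof -
  have a1: "of_int \<lfloor>a/q\<rfloor> * q \<le> a" "a < (of_int \<lfloor>a/q\<rfloor> + 1) * q"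
    using floor_divide_lower floor_divide_upper assms by auto
  show ?thesis
    by (rule that[of "a - of_int \<lfloor>a/q\<rfloor> * q" "\<lfloor>a/q\<rfloor>"]) (use a1 in \<open>auto simp: algebra_simps\<close>)
qed

lemma dp_has_integral_shift:
  fixes G :: "real \<times> real \<Rightarrow> real"
  assumes "dp q b G" "q > 0" "b > 0" "(G has_integral I) (cbox (0,0) (q,b))"
  shows "((\<lambda>z. G (z + a)) has_integral I) (cbox (0,0) (q,b))"
proof -
  obtain a1 a2 where a: "a = (a1,a2)" by fastforce
  have p1: "\<And>z. G (z + (q,0)) = G z" and p2: "\<And>z. G (z + (0,b)) = G z"
    using assms(1) unfolding dp_def by blast+
  obtain r1 m1 where r1: "0 \<le> r1" "r1 \<le> q" "a1 = r1 + of_int m1 * q" using reduce_mod assms(2) by blast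
  obtain r2 m2 where r2: "0 \<le> r2" "r2 \<le> b" "a2 = r2 + of_int m2 * b" using reduce_mod assms(3) by blast
  define G1 where "G1 = (\<lambda>z. G (z + (r1,0)))"
  have G1i: "(G1 has_integral I) (cbox (0,0) (q,b))"
    unfolding G1_def using shift_fst_has_integral[OF p1 r1(1,2) assms(4)] .
  have G1p: "G1 (z + (0,b)) = G1 z" for z
    unfolding G1_def using p2[of "z + (r1,0)"] by (simp add: add_ac)
  have G2i: "((\<lambda>z. G1 (z + (0,r2))) has_integral I) (cbox (0,0) (q,b))"
    using shift_snd_has_integral[of G1 b r2 I q, OF G1p r2(1,2) G1i] .
  have "G (z + a) = G1 (z + (0,r2))" for z
  proof -
    define Y where "Y = z + (r1,0) + (0,r2)"
    have e: "z + a = (Y + of_int m1 *\<^sub>R (q,0)) + of_int m2 *\<^sub>R (0,b)"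
      using a r1(3) r2(3) by (simp add: Y_def algebra_simps)
    have "G (z + a) = G ((Y + of_int m1 *\<^sub>R (q,0)) + of_int m2 *\<^sub>R (0,b))" by (simp only: e)
    also have "\<dots> = G (Y + of_int m1 *\<^sub>R (q,0))" by (rule periodic_int[of G "(0,b)", OF p2])
    also have "\<dots> = G Y" by (rule periodic_int[of G "(q,0)", OF p1])
    finally have "G (z + a) = G (z + (r1,0) + (0,r2))" by (simp add: Y_def)
    then show ?thesis unfolding G1_def by (simp add: add_ac)
  qed
  then show ?thesis using G2i by simp
qed

lemma dp_shift:
  assumes "dp q b G" shows "dp q b (\<lambda>z. G (z + a))"
  unfolding dp_def
proof (intro allI conjI)
  fix z :: "real \<times> real"
  have p1: "G (y + (q,0)) = G y" and p2: "G (y + (0,b)) = G y" for y using assms unfolding dp_def by blast+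
  have "G (z + (q,0) + a) = G ((z + a) + (q,0))" by (simp add: add_ac)
  also have "\<dots> = G (z + a)" by (rule p1)
  finally show "G (z + (q, 0) + a) = G (z + a)" .
  have "G (z + (0,b) + a) = G ((z + a) + (0,b))" by (simp add: add_ac)
  also have "\<dots> = G (z + a)" by (rule p2)
  finally show "G (z + (0, b) + a) = G (z + a)" .
qed

lemma dp_integral_shift:
  fixes G :: "real \<times> real \<Rightarrow> real"
  assumes "dp q b G" "q > 0" "b > 0"
  shows "integral (cbox (0,0) (q,b)) (\<lambda>z. G (z + a)) = integral (cbox (0,0) (q,b)) G"
proof (cases "G integrable_on cbox (0,0) (q,b)")
  case True
  then have "(G has_integral integral (cbox (0,0) (q,b)) G) (cbox (0,0) (q,b))"
    by (rule integrable_integral)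
  from dp_has_integral_shift[OF assms this, of a] show ?thesis by (rule integral_unique)
next
  case False
  have "\<not> (\<lambda>z. G (z + a)) integrable_on cbox (0,0) (q,b)"
  proof
    assume "(\<lambda>z. G (z + a)) integrable_on cbox (0,0) (q,b)"
    then obtain J where "((\<lambda>z. G (z + a)) has_integral J) (cbox (0,0) (q,b))" by blast
    from dp_has_integral_shift[OF dp_shift[OF assms(1)] assms(2,3) this, of "-a"]
    have "(G has_integral J) (cbox (0,0) (q,b))" by simp
    then show False using False by blast
  qed
  then show ?thesis using False by (metis not_integrable_integral)
qed

lemma torus_dp: "torus_periodic b c u \<Longrightarrow> dp (b/c) b u"
  unfolding torus_periodic_def dp_def by auto

lemma action_shift:
  assumes "torus_periodic b c w" "c \<noteq> 0" "b > 0"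
  shows "discrete_action b c dt dx L (\<lambda>z. w (z + a)) = discrete_action b c dt dx L w"
proof -
  define F where "F = (\<lambda>(t,x). L (w (t, x)) (w (t + dt, x)) (w (t, x + dx)))"
  have dw: "dp (b/c) b w" using torus_dp[OF assms(1)] .
  have w1: "w (y + (b/c,0)) = w y" and w2: "w (y + (0,b)) = w y" for y using dw unfolding dp_def by blast+
  have "dp (b/c) b F" unfolding dp_def
  proof (intro allI conjI)
    fix z :: "real \<times> real"
    obtain t x where z: "z = (t,x)" by fastforce
    show "F (z + (b/c,0)) = F z"
      using w1[of "(t,x)"] w1[of "(t+dt,x)"] w1[of "(t,x+dx)"] by (simp add: F_def z add_ac)
    show "F (z + (0,b)) = F z"
      using w2[of "(t,x)"] w2[of "(t+dt,x)"] w2[of "(t,x+dx)"] by (simp add: F_def z add_ac)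
  qed
  then have dF: "dp \<bar>b/c\<bar> b F" by (rule dp_abs)
  have q: "\<bar>b/c\<bar> > 0" using assms by simp
  have eq: "(\<lambda>(t, x). L (w ((t, x) + a)) (w ((t + dt, x) + a)) (w ((t, x + dx) + a))) = (\<lambda>z. F (z + a))"
  proof (rule ext)
    fix z :: "real \<times> real"
    obtain t x where z: "z = (t,x)" by fastforce
    obtain a1 a2 where a: "a = (a1,a2)" by fastforce
    show "(\<lambda>(t, x). L (w ((t, x) + a)) (w ((t + dt, x) + a)) (w ((t, x + dx) + a))) z = F (z + a)"
      by (simp add: F_def z a add_ac)
  qed
  show ?thesis unfolding discrete_action_def
    using dp_integral_shift[OF dF q assms(3), of a] eq by (simp add: F_def)
qed



lemma deriv_lin:
  assumes "(v has_derivative Dz) F"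
  shows "Dz (k1,k2) = k1 *\<^sub>R Dz (1,0) + k2 *\<^sub>R Dz (0,1)"
proof -
  have l: "linear Dz" using has_derivative_linear[OF assms] .
  have "(k1,k2) = k1 *\<^sub>R (1::real,0::real) + k2 *\<^sub>R (0,1)" by simp
  then show ?thesis using linear_add[OF l] linear_scale[OF l] by metis
qed

lemma deriv_periodic:
  fixes v :: "real \<times> real \<Rightarrow> 'b::real_normed_vector"
  assumes d: "\<And>z. (v has_derivative D z) (at z)" and p: "\<And>z. v (z + a) = v z"
  shows "D (z + a) = D z"
proof -
  have "((\<lambda>y. y + a) has_derivative (\<lambda>h. h)) (at z)" by (auto intro!: derivative_eq_intros)
  from has_derivative_compose[OF this d[of "z+a"]]
  have "((\<lambda>y. v (y + a)) has_derivative D (z + a)) (at z)" by simp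
  moreover have "(\<lambda>y. v (y + a)) = v" using p by auto
  ultimately have "(v has_derivative D (z + a)) (at z)" by simp
  then show ?thesis using has_derivative_unique d by blast
qed

lemma deriv_dp:
  fixes v :: "real \<times> real \<Rightarrow> 'b::real_normed_vector"
  assumes d: "\<And>z. (v has_derivative D z) (at z)" and p: "dp q b v"
  shows "dp q b (\<lambda>z. D z k)"
proof -
  have p1: "v (y + (q,0)) = v y" and p2: "v (y + (0,b)) = v y" for y using p unfolding dp_def by blast+
  show ?thesis unfolding dp_def using deriv_periodic[OF d p1] deriv_periodic[OF d p2] by simp
qed

lemma dp_range:
  assumes "dp q b f" "q>0" "b>0"
  shows "range f = f ` cbox (0,0) (q,b)"
proof
  show "range f \<subseteq> f ` cbox (0,0) (q,b)"
  proof
    fix y assume "y \<in> range f"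
    then obtain z where z: "y = f z" by blast
    obtain s where s: "\<forall>w. f (w + s) = f w" "z + s \<in> cbox (0,0) (q,b)" using dp_reduce[OF assms] by blast
    have "y = f (z + s)" using spec[OF s(1), of z] z by simp
    then show "y \<in> f ` cbox (0,0) (q,b)" using s(2) by blast
  qed
qed auto

lemma dp_bounded:
  fixes f :: "real \<times> real \<Rightarrow> 'b::real_normed_vector"
  assumes "dp q b f" "q>0" "b>0" "continuous_on UNIV f"
  shows "bounded (range f)"
proof -
  have "compact (f ` cbox (0,0) (q,b))"
    by (rule compact_continuous_image[OF continuous_on_subset[OF assms(4)]]) auto
  then show ?thesis using dp_range[OF assms(1-3)] compact_imp_bounded by metis
qed

lemma dp_ucont:
  fixes f :: "real \<times> real \<Rightarrow> 'b::real_normed_vector"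
  assumes "dp q b f" "q>0" "b>0" "continuous_on UNIV f"
  shows "\<forall>e>0. \<exists>d>0. \<forall>y y'. dist y' y < d \<longrightarrow> dist (f y') (f y) < e"
proof (intro allI impI)
  fix e :: real assume e: "e > 0"
  define K :: "(real \<times> real) set" where "K = cbox (-1,-1) (q+1, b+1)"
  have "uniformly_continuous_on K f"
    unfolding K_def by (rule compact_uniformly_continuous[OF continuous_on_subset[OF assms(4)]]) auto
  then obtain d where d: "d > 0" "\<forall>x\<in>K. \<forall>x'\<in>K. dist x' x < d \<longrightarrow> dist (f x') (f x) < e"
    unfolding uniformly_continuous_on_def using e by metis
  show "\<exists>d>0. \<forall>y y'. dist y' y < d \<longrightarrow> dist (f y') (f y) < e"
  proof (intro exI[of _ "min d 1"] conjI allI impI)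
    show "min d 1 > 0" using d by simp
    fix y y' :: "real \<times> real" assume dy: "dist y' y < min d 1"
    obtain s where s: "\<forall>w. f (w + s) = f w" "y + s \<in> cbox (0,0) (q,b)" using dp_reduce[OF assms(1-3)] by blast
    define p where "p = y + s"
    define p' where "p' = y' + s"
    have dp': "dist p' p = dist y' y" unfolding p_def p'_def by (simp add: dist_norm)
    have f1: "dist (fst p') (fst p) < 1" using dist_fst_le[of p' p] dp' dy by simp
    have f2: "dist (snd p') (snd p) < 1" using dist_snd_le[of p' p] dp' dy by simp
    have pK: "p \<in> K" using s(2) unfolding p_def K_def by (auto simp: cbox_Pair_eq mem_Times_iff)
    have "fst p \<ge> 0" "fst p \<le> q" "snd p \<ge> 0" "snd p \<le> b" using s(2) unfolding p_def by (auto simp: cbox_Pair_eq mem_Times_iff)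
    then have p'K: "p' \<in> K" using f1 f2 unfolding K_def by (auto simp: cbox_Pair_eq mem_Times_iff dist_real_def)
    have "dist (f p') (f p) < e" using d(2) pK p'K dp' dy by auto
    then show "dist (f y') (f y) < e" using spec[OF s(1), of y] spec[OF s(1), of y'] unfolding p_def p'_def by simp
  qed
qed

lemma orbit_uc:
  fixes f :: "real \<times> real \<Rightarrow> 'b::real_normed_vector"
  assumes "dp q b f" "q>0" "b>0" "continuous_on UNIV f"
  shows "\<forall>e>0. \<exists>d>0. \<forall>y r. \<bar>r\<bar> \<le> d \<longrightarrow> norm (f (y + (r, c*r)) - f y) \<le> e"
proof (intro allI impI)
  fix e :: real assume e: "e > 0"
  obtain d0 where d0: "d0 > 0" "\<forall>y y'. dist y' y < d0 \<longrightarrow> dist (f y') (f y) < e"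
    using dp_ucont[OF assms] e by blast
  define d where "d = d0 / (2 * (1 + \<bar>c\<bar>))"
  have dpos: "d > 0" using d0 unfolding d_def by (simp add: add_pos_nonneg)
  show "\<exists>d>0. \<forall>y r. \<bar>r\<bar> \<le> d \<longrightarrow> norm (f (y + (r, c*r)) - f y) \<le> e"
  proof (intro exI[of _ d] conjI allI impI)
    show "d > 0" by (rule dpos)
    fix y :: "real \<times> real" and r :: real assume r: "\<bar>r\<bar> \<le> d"
    have "norm (r, c*r) \<le> \<bar>r\<bar> + \<bar>c\<bar> * \<bar>r\<bar>" using norm_Pair_le[of r "c*r"] by (simp add: abs_mult)
    also have "\<dots> = (1 + \<bar>c\<bar>) * \<bar>r\<bar>" by (simp add: algebra_simps)
    also have "\<dots> \<le> (1 + \<bar>c\<bar>) * d" using r by (intro mult_left_mono) auto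
    also have "\<dots> < d0" using d0 unfolding d_def by (simp add: field_simps add_pos_nonneg)
    finally have "dist (y + (r, c*r)) y < d0" by (simp add: dist_norm)
    then have "dist (f (y + (r, c*r))) (f y) < e" using d0 by blast
    then show "norm (f (y + (r, c*r)) - f y) \<le> e" by (simp add: dist_norm)
  qed
qed



definition Av :: "real \<Rightarrow> real \<Rightarrow> nat \<Rightarrow> (real \<times> real \<Rightarrow> 'b::real_vector) \<Rightarrow> real \<times> real \<Rightarrow> 'b" where
  "Av c h N f z = (1 / real N) *\<^sub>R (\<Sum>k<N. f (z + (real k * h, c * (real k * h))))"

lemma Av_shift_inv:
  assumes "\<And>y. f (y + (real N * h, c * (real N * h))) = f y"
  shows "Av c h N f (z + (h, c*h)) = Av c h N f z"
proof -
  define g where "g k = f (z + (real k * h, c * (real k * h)))" for k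
  have "(\<Sum>k<N. f (z + (h, c*h) + (real k * h, c * (real k * h)))) = (\<Sum>k<N. g (Suc k))"
    unfolding g_def by (intro sum.cong) (auto simp: algebra_simps)
  also have "\<dots> = (\<Sum>k<N. g k) + g N - g 0"
    using sum.lessThan_Suc_shift[of g N] sum.lessThan_Suc[of g N] by (simp add: algebra_simps)
  also have "g N = g 0" unfolding g_def using assms[of z] by (simp flip: zero_prod_def)
  finally show ?thesis unfolding Av_def g_def by simp
qed

lemma Av_int_inv:
  assumes "\<And>y. f (y + (real N * h, c * (real N * h))) = f y"
  shows "Av c h N f (z + (of_int m * h, c * (of_int m * h))) = Av c h N f z"
proof -
  have "Av c h N f (z + of_int m *\<^sub>R (h, c*h)) = Av c h N f z"
    by (rule periodic_int[of "Av c h N f" "(h, c*h)"]) (rule Av_shift_inv[where f=f and N=N and h=h and c=c, OF assms])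
  then show ?thesis by (simp add: algebra_simps)
qed

lemma Av_close:
  fixes f :: "real \<times> real \<Rightarrow> 'b::real_normed_vector"
  assumes "N > 0" "\<And>y. norm (f (y + a) - f y) \<le> e"
  shows "norm (Av c h N f (z + a) - Av c h N f z) \<le> e"
proof -
  define ek where "ek k = (real k * h, c * (real k * h))" for k
  have "Av c h N f (z + a) - Av c h N f z = (1 / real N) *\<^sub>R (\<Sum>k<N. f ((z + ek k) + a) - f (z + ek k))"
    unfolding Av_def ek_def by (simp add: sum_subtractf scaleR_diff_right add_ac)
  also have "norm \<dots> \<le> (1 / real N) * (\<Sum>k<N. norm (f ((z + ek k) + a) - f (z + ek k)))"
    by (simp add: divide_right_mono norm_sum)
  also have "\<dots> \<le> (1 / real N) * (\<Sum>k<N. e)"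
    by (intro mult_left_mono sum_mono assms(2)) auto
  also have "\<dots> = e" using assms(1) by simp
  finally show ?thesis .
qed

lemma Av_periodic:
  assumes "\<And>y. f (y + a) = f y"
  shows "Av c h N f (z + a) = Av c h N f z"
proof -
  have "f (z + a + e) = f (z + e)" for e
  proof -
    have "f (z + a + e) = f ((z + e) + a)" by (simp add: add_ac)
    then show ?thesis using assms by simp
  qed
  then show ?thesis unfolding Av_def by simp
qed

lemma Av_dp: "dp q b f \<Longrightarrow> dp q b (Av c h N f)"
  unfolding dp_def by (intro allI conjI Av_periodic) blast+

lemma cont_shift:
  fixes f :: "real \<times> real \<Rightarrow> 'b::real_normed_vector"
  shows "continuous_on UNIV f \<Longrightarrow> continuous_on UNIV (\<lambda>z. f (z + a))"
  by (rule continuous_on_compose2[of UNIV f]) (auto intro: continuous_intros)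

lemma Av_cont:
  fixes f :: "real \<times> real \<Rightarrow> 'b::real_normed_vector"
  assumes "continuous_on UNIV f"
  shows "continuous_on UNIV (Av c h N f)"
  unfolding Av_def by (intro continuous_intros cont_shift assms)

lemma has_derivative_shift:
  assumes "(f has_derivative D) (at (z + a))"
  shows "((\<lambda>y. f (y + a)) has_derivative D) (at z)"
proof -
  have "((\<lambda>y. y + a) has_derivative (\<lambda>h. h)) (at z)" by (auto intro!: derivative_eq_intros)
  from has_derivative_compose[OF this assms] show ?thesis by simp
qed

lemma Av_deriv:
  fixes f :: "real \<times> real \<Rightarrow> 'b::real_normed_vector"
  assumes "\<And>z. (f has_derivative D z) (at z)"
  shows "(Av c h N f has_derivative (\<lambda>k. Av c h N (\<lambda>y. D y k) z)) (at z)"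
proof -
  have "\<And>k. ((\<lambda>y. f (y + (real k * h, c * (real k * h)))) has_derivative D (z + (real k * h, c * (real k * h)))) (at z)"
    by (rule has_derivative_shift[OF assms])
  then have "((\<lambda>y. \<Sum>k<N. f (y + (real k * h, c * (real k * h)))) has_derivative
      (\<lambda>x. \<Sum>k<N. D (z + (real k * h, c * (real k * h))) x)) (at z)"
    by (intro has_derivative_sum)
  then have "((\<lambda>y. (1 / real N) *\<^sub>R (\<Sum>k<N. f (y + (real k * h, c * (real k * h))))) has_derivative
      (\<lambda>x. (1 / real N) *\<^sub>R (\<Sum>k<N. D (z + (real k * h, c * (real k * h))) x))) (at z)"
    by (rule has_derivative_scaleR_right)
  then show ?thesis unfolding Av_def by (simp add: fun_eq_iff)
qed

lemma Av_lin:
  fixes f g :: "real \<times> real \<Rightarrow> 'b::real_vector"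
  shows "Av c h N (\<lambda>y. f y - r *\<^sub>R g y) z = Av c h N f z - r *\<^sub>R Av c h N g z"
  unfolding Av_def by (simp add: sum_subtractf scaleR_sum_right scaleR_diff_right)

lemma Av_scale:
  fixes g :: "real \<times> real \<Rightarrow> 'b::real_vector"
  shows "Av c h N (\<lambda>y. r *\<^sub>R g y) z = r *\<^sub>R Av c h N g z"
  unfolding Av_def by (simp add: scaleR_sum_right)



lemma C1_add: "C1_map f \<Longrightarrow> C1_map g \<Longrightarrow> C1_map (\<lambda>z. f z + g z)"
  unfolding C1_map_def
proof (elim exE conjE)
  fix Df Dg assume f: "\<forall>z. (f has_derivative Df z) (at z)" "continuous_on UNIV (\<lambda>z. Df z (1, 0))"
    "continuous_on UNIV (\<lambda>z. Df z (0, 1))"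
    and g: "\<forall>z. (g has_derivative Dg z) (at z)" "continuous_on UNIV (\<lambda>z. Dg z (1, 0))"
    "continuous_on UNIV (\<lambda>z. Dg z (0, 1))"
  show "\<exists>D. (\<forall>z. ((\<lambda>z. f z + g z) has_derivative D z) (at z)) \<and>
        continuous_on UNIV (\<lambda>z. D z (1, 0)) \<and> continuous_on UNIV (\<lambda>z. D z (0, 1))"
    by (rule exI[of _ "\<lambda>z k. Df z k + Dg z k"]) (use f g in \<open>auto intro!: has_derivative_add continuous_intros\<close>)
qed

lemma C1_scale: "C1_map f \<Longrightarrow> C1_map (\<lambda>z. r *\<^sub>R f z)"
  unfolding C1_map_def
proof (elim exE conjE)
  fix Df assume f: "\<forall>z. (f has_derivative Df z) (at z)" "continuous_on UNIV (\<lambda>z. Df z (1, 0))"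
    "continuous_on UNIV (\<lambda>z. Df z (0, 1))"
  show "\<exists>D. (\<forall>z. ((\<lambda>z. r *\<^sub>R f z) has_derivative D z) (at z)) \<and>
        continuous_on UNIV (\<lambda>z. D z (1, 0)) \<and> continuous_on UNIV (\<lambda>z. D z (0, 1))"
    by (rule exI[of _ "\<lambda>z k. r *\<^sub>R Df z k"]) (use f in \<open>auto intro!: has_derivative_scaleR_right continuous_intros\<close>)
qed

lemma C1_shift: "C1_map f \<Longrightarrow> C1_map (\<lambda>z. f (z + a))"
  unfolding C1_map_def
proof (elim exE conjE)
  fix Df assume f: "\<forall>z. (f has_derivative Df z) (at z)" "continuous_on UNIV (\<lambda>z. Df z (1, 0))"
    "continuous_on UNIV (\<lambda>z. Df z (0, 1))"
  show "\<exists>D. (\<forall>z. ((\<lambda>z. f (z + a)) has_derivative D z) (at z)) \<and>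
        continuous_on UNIV (\<lambda>z. D z (1, 0)) \<and> continuous_on UNIV (\<lambda>z. D z (0, 1))"
  proof (rule exI[of _ "\<lambda>z. Df (z + a)"], intro conjI)
    show "\<forall>z. ((\<lambda>z. f (z + a)) has_derivative Df (z + a)) (at z)" using f(1) has_derivative_shift by blast
    show "continuous_on UNIV (\<lambda>z. Df (z + a) (1,0))" using cont_shift[OF f(2), of a] by simp
    show "continuous_on UNIV (\<lambda>z. Df (z + a) (0,1))" using cont_shift[OF f(3), of a] by simp
  qed
qed

lemma C1_zero: "C1_map (\<lambda>z. 0)"
  unfolding C1_map_def by (rule exI[of _ "\<lambda>z k. 0"]) auto

lemma C1_sum:
  fixes n :: nat
  shows "(\<And>k. C1_map (g k)) \<Longrightarrow> C1_map (\<lambda>z. \<Sum>k<n. g k z)"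
proof (induction n)
  case 0 then show ?case using C1_zero by simp
next
  case (Suc n)
  then show ?case using C1_add[OF Suc.IH[OF Suc.prems] Suc.prems[of n]] by simp
qed

lemma C1_pi:
  fixes f :: "real \<times> real \<Rightarrow> real ^ 'd"
  assumes "C1_map f"
  shows "C1_map (\<lambda>z. f (0, snd z - c * fst z))"
proof -
  obtain Df where f: "\<And>z. (f has_derivative Df z) (at z)" "continuous_on UNIV (\<lambda>z. Df z (1, 0))"
    "continuous_on UNIV (\<lambda>z. Df z (0, 1))" using assms unfolding C1_map_def by blast
  define pi :: "real \<times> real \<Rightarrow> real \<times> real" where "pi z = (0, snd z - c * fst z)" for z
  have dpi: "(pi has_derivative pi) (at z)" for z
    unfolding pi_def by (auto intro!: derivative_eq_intros)
  have d: "((\<lambda>z. f (pi z)) has_derivative (\<lambda>k. Df (pi z) (pi k))) (at z)" for z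
    using has_derivative_compose[OF dpi f(1)] by simp
  have cpi: "continuous_on UNIV pi" unfolding pi_def by (intro continuous_intros)
  have c01: "continuous_on UNIV (\<lambda>z. Df (pi z) (0,1))"
    by (rule continuous_on_compose2[OF f(3) cpi]) auto
  have e10: "Df (pi z) (pi (1,0)) = (-c) *\<^sub>R Df (pi z) (0,1)" for z
    using deriv_lin[OF f(1)[of "pi z"], of 0 "-c"] by (simp add: pi_def)
  have e01: "Df (pi z) (pi (0,1)) = Df (pi z) (0,1)" for z by (simp add: pi_def)
  show ?thesis unfolding C1_map_def
    by (rule exI[of _ "\<lambda>z k. Df (pi z) (pi k)"]) (use d c01 e10 e01 in \<open>auto simp: pi_def intro!: continuous_intros\<close>)
qed



lemma W_iff: "v \<in> W_space b c \<longleftrightarrow> torus_periodic b c v \<and> C1_map v"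
  by (simp add: W_space_def)

lemma W_data:
  assumes "v \<in> W_space b c"
  obtains D where "\<And>z. (v has_derivative D z) (at z)" "\<And>k. continuous_on UNIV (\<lambda>z. D z k)"
    "dp (b/c) b v" "\<And>z. frechet_derivative v (at z) = D z"
proof -
  obtain D where D: "\<And>z. (v has_derivative D z) (at z)" "continuous_on UNIV (\<lambda>z. D z (1, 0))"
    "continuous_on UNIV (\<lambda>z. D z (0, 1))" using assms unfolding W_iff C1_map_def by blast
  have c: "continuous_on UNIV (\<lambda>z. D z k)" for k
  proof -
    obtain k1 k2 where k: "k = (k1,k2)" by fastforce
    have "continuous_on UNIV (\<lambda>z. k1 *\<^sub>R D z (1,0) + k2 *\<^sub>R D z (0,1))"
      by (intro continuous_intros D(2,3))
    moreover have "D z k = k1 *\<^sub>R D z (1,0) + k2 *\<^sub>R D z (0,1)" for z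
      unfolding k by (rule deriv_lin[OF D(1)])
    ultimately show ?thesis by simp
  qed
  show ?thesis
  proof (rule that[OF D(1) c])
    show "dp (b/c) b v" using assms torus_dp unfolding W_iff by blast
    show "frechet_derivative v (at z) = D z" for z using frechet_derivative_at[OF D(1)[of z]] by simp
  qed
qed

lemma bounded_norm_bdd: "bounded (range f) \<Longrightarrow> bdd_above (range (\<lambda>z. norm (f z)))"
  unfolding bounded_iff bdd_above_def by auto

lemma sup_scale:
  fixes g :: "'a \<Rightarrow> real"
  assumes "bdd_above (range g)" "r \<ge> 0"
  shows "Sup (range (\<lambda>z. r * g z)) = r * Sup (range g)"
proof (cases "r = 0")
  case True
  have "range (\<lambda>z::'a. 0::real) = {0}" by auto
  then show ?thesis using True by simp
next
  case False
  then have r: "r > 0" using assms(2) by simp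
  have up: "g z \<le> Sup (range g)" for z by (rule cSup_upper[OF _ assms(1)]) simp
  have bd2: "bdd_above (range (\<lambda>z. r * g z))"
    unfolding bdd_above_def using up r by (auto intro!: exI[of _ "r * Sup (range g)"] mult_left_mono)
  have up2: "r * g z \<le> Sup (range (\<lambda>z. r * g z))" for z by (rule cSup_upper[OF _ bd2]) blast
  have "Sup (range (\<lambda>z. r * g z)) \<le> r * Sup (range g)"
    by (rule cSup_least) (use up r in \<open>auto intro: mult_left_mono\<close>)
  moreover have "Sup (range g) \<le> Sup (range (\<lambda>z. r * g z)) / r"
    by (rule cSup_least) (use up2 r in \<open>auto simp: field_simps\<close>)
  then have "r * Sup (range g) \<le> Sup (range (\<lambda>z. r * g z))" using r by (simp add: field_simps)
  ultimately show ?thesis by simp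
qed

lemma W_bdd:
  assumes "v \<in> W_space b c" "b > 0" "c \<noteq> 0"
  shows "bdd_above (range (\<lambda>z. norm (v z)))"
    "bdd_above (range (\<lambda>z. norm (frechet_derivative v (at z) k)))"
proof -
  obtain D where D: "\<And>z. (v has_derivative D z) (at z)" "\<And>k. continuous_on UNIV (\<lambda>z. D z k)"
    "dp (b/c) b v" "\<And>z. frechet_derivative v (at z) = D z" using W_data[OF assms(1)] by blast
  have q: "\<bar>b/c\<bar> > 0" using assms by simp
  have cv: "continuous_on UNIV v"
    by (rule continuous_at_imp_continuous_on) (use has_derivative_continuous[OF D(1)] in blast)
  show "bdd_above (range (\<lambda>z. norm (v z)))"
    by (rule bounded_norm_bdd, rule dp_bounded[OF dp_abs[OF D(3)] q assms(2) cv])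
  have "bounded (range (\<lambda>z. D z k))"
    by (rule dp_bounded[OF dp_abs[OF deriv_dp[OF D(1) D(3)]] q assms(2) D(2)])
  then have "bdd_above (range (\<lambda>z. norm (D z k)))" by (rule bounded_norm_bdd)
  then show "bdd_above (range (\<lambda>z. norm (frechet_derivative v (at z) k)))"
    by (simp only: D(4))
qed

lemma C1_norm_scale:
  assumes "v \<in> W_space b c" "b > 0" "c \<noteq> 0"
  shows "C1_norm (\<lambda>z. r *\<^sub>R v z) = \<bar>r\<bar> * C1_norm v"
proof -
  obtain D where D1: "\<And>z. (v has_derivative D z) (at z)" and D2: "\<And>z. frechet_derivative v (at z) = D z"
    using W_data[OF assms(1)] by metis
  have "((\<lambda>z. r *\<^sub>R v z) has_derivative (\<lambda>k. r *\<^sub>R D z k)) (at z)" for z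
    using D1[of z] by (rule has_derivative_scaleR_right)
  then have fd: "frechet_derivative (\<lambda>z. r *\<^sub>R v z) (at z) = (\<lambda>k. r *\<^sub>R D z k)" for z
    using frechet_derivative_at by metis
  have b1: "bdd_above (range (\<lambda>z. norm (v z)))" using W_bdd(1)[OF assms] .
  have b2: "bdd_above (range (\<lambda>z. norm (D z k)))" for k
    using W_bdd(2)[OF assms, of k] by (simp only: D2)
  have e1: "Sup (range (\<lambda>z. norm (r *\<^sub>R v z))) = \<bar>r\<bar> * Sup (range (\<lambda>z. norm (v z)))"
    using sup_scale[OF b1, of "\<bar>r\<bar>"] by simp
  have e2: "Sup (range (\<lambda>z. norm (r *\<^sub>R D z k))) = \<bar>r\<bar> * Sup (range (\<lambda>z. norm (D z k)))" for k
    using sup_scale[OF b2[of k], of "\<bar>r\<bar>"] by simp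
  show ?thesis unfolding C1_norm_def fd D2 e1 e2 by (simp add: algebra_simps)
qed

lemma C1_norm_bound:
  assumes "\<And>z. norm (h z) \<le> e" "\<And>z. norm (frechet_derivative h (at z) (1,0)) \<le> e"
    "\<And>z. norm (frechet_derivative h (at z) (0,1)) \<le> e"
  shows "0 \<le> C1_norm h" "C1_norm h \<le> 3 * e"
proof -
  have gen: "0 \<le> Sup (range g) \<and> Sup (range g) \<le> e" if "\<And>z. g z \<le> e" "\<And>z. 0 \<le> g z" for g :: "real \<times> real \<Rightarrow> real"
  proof
    have bd: "bdd_above (range g)" using that(1) unfolding bdd_above_def by auto
    show "0 \<le> Sup (range g)" using cSup_upper[OF _ bd, of "g 0"] that(2)[of 0] by simp
    show "Sup (range g) \<le> e" by (rule cSup_least) (use that in auto)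
  qed
  note g1 = gen[of "\<lambda>z. norm (h z)", OF assms(1)]
  note g2 = gen[of "\<lambda>z. norm (frechet_derivative h (at z) (1,0))", OF assms(2)]
  note g3 = gen[of "\<lambda>z. norm (frechet_derivative h (at z) (0,1))", OF assms(3)]
  show "0 \<le> C1_norm h" "C1_norm h \<le> 3 * e" unfolding C1_norm_def using g1 g2 g3 by auto
qed

lemma deriv_formula:
  fixes S :: "(real \<times> real \<Rightarrow> real ^ 'd) \<Rightarrow> real"
  assumes approx: "\<forall>e>0. \<exists>\<delta>>0. \<forall>h\<in>V. C1_norm h < \<delta> \<longrightarrow>
               \<bar>S (\<lambda>z. u z + h z) - S u - DS h\<bar> \<le> e * C1_norm h"
    and lin: "\<forall>h\<in>V. \<forall>r. DS (\<lambda>z. r *\<^sub>R h z) = r * DS h"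
    and v: "v \<in> V" "\<And>r. (\<lambda>z. r *\<^sub>R v z) \<in> V" "\<And>r. C1_norm (\<lambda>z. r *\<^sub>R v z) = \<bar>r\<bar> * C1_norm v"
      "C1_norm v \<ge> 0"
  shows "((\<lambda>\<epsilon>. S (\<lambda>z. u z + \<epsilon> *\<^sub>R v z)) has_real_derivative DS v) (at 0)"
  unfolding has_field_derivative_def has_derivative_at_alt
proof (intro conjI allI impI)
  show "bounded_linear ((*) (DS v))" by (rule bounded_linear_mult_right)
  fix e :: real assume e: "e > 0"
  define M where "M = C1_norm v"
  have M: "M \<ge> 0" using v(4) unfolding M_def .
  obtain \<delta> where \<delta>: "\<delta> > 0" "\<forall>h\<in>V. C1_norm h < \<delta> \<longrightarrow>
               \<bar>S (\<lambda>z. u z + h z) - S u - DS h\<bar> \<le> (e / (M + 1)) * C1_norm h"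
  proof -
    have "e / (M + 1) > 0" using M e by simp
    then show ?thesis using approx that by blast
  qed
  show "\<exists>d>0. \<forall>y. norm (y - 0) < d \<longrightarrow>
      norm (S (\<lambda>z. u z + y *\<^sub>R v z) - S (\<lambda>z. u z + 0 *\<^sub>R v z) - DS v * (y - 0)) \<le> e * norm (y - 0)"
  proof (intro exI[of _ "\<delta> / (M + 1)"] conjI allI impI)
    show "\<delta> / (M + 1) > 0" using \<delta> M by simp
    fix y :: real assume y: "norm (y - 0) < \<delta> / (M + 1)"
    then have y': "\<bar>y\<bar> * (M + 1) < \<delta>" using M by (simp add: field_simps)
    have "\<bar>y\<bar> * M \<le> \<bar>y\<bar> * (M + 1)" by (simp add: mult_left_mono)
    then have c: "C1_norm (\<lambda>z. y *\<^sub>R v z) < \<delta>" using y' v(3) M_def by simp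
    have "\<bar>S (\<lambda>z. u z + y *\<^sub>R v z) - S u - DS (\<lambda>z. y *\<^sub>R v z)\<bar> \<le> (e / (M + 1)) * C1_norm (\<lambda>z. y *\<^sub>R v z)"
      using \<delta>(2) v(2) c by blast
    also have "\<dots> = e * \<bar>y\<bar> * (M / (M + 1))" using v(3) M_def by (simp add: field_simps)
    also have "\<dots> \<le> e * \<bar>y\<bar> * 1" using M e by (intro mult_left_mono) auto
    finally have "\<bar>S (\<lambda>z. u z + y *\<^sub>R v z) - S u - y * DS v\<bar> \<le> e * \<bar>y\<bar>"
      using lin v(1) by simp
    moreover have "(\<lambda>z. u z + 0 *\<^sub>R v z) = u" by simp
    ultimately show "norm (S (\<lambda>z. u z + y *\<^sub>R v z) - S (\<lambda>z. u z + 0 *\<^sub>R v z) - DS v * (y - 0)) \<le> e * norm (y - 0)"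
      by (simp add: mult.commute)
  qed
qed



lemma torus_dp_iff: "torus_periodic b c u \<longleftrightarrow> dp (b/c) b u"
proof
  assume "dp (b/c) b u"
  then have "u ((t,x) + (b/c,0)) = u (t,x) \<and> u ((t,x) + (0,b)) = u (t,x)" for t x unfolding dp_def by blast
  then show "torus_periodic b c u" unfolding torus_periodic_def by simp
qed (rule torus_dp)

lemma W_shift: "v \<in> W_space b c \<Longrightarrow> (\<lambda>z. v (z + a)) \<in> W_space b c"
  unfolding W_iff torus_dp_iff using dp_shift C1_shift by blast

lemma W_add: "f \<in> W_space b c \<Longrightarrow> g \<in> W_space b c \<Longrightarrow> (\<lambda>z. f z + g z) \<in> W_space b c"
  unfolding W_iff torus_dp_iff dp_def using C1_add by auto

lemma W_scale: "f \<in> W_space b c \<Longrightarrow> (\<lambda>z. r *\<^sub>R f z) \<in> W_space b c"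
  unfolding W_iff torus_dp_iff dp_def using C1_scale by auto

lemma W_zero: "(\<lambda>z. 0) \<in> W_space b c"
  unfolding W_iff torus_dp_iff dp_def using C1_zero by auto

lemma W_sum:
  fixes n :: nat
  shows "(\<And>k. g k \<in> W_space b c) \<Longrightarrow> (\<lambda>z. \<Sum>k<n. g k z) \<in> W_space b c"
proof (induction n)
  case 0 then show ?case using W_zero by simp
next
  case (Suc n)
  then show ?case using W_add[OF Suc.IH[OF Suc.prems] Suc.prems[of n]] by simp
qed

lemma Av_eq: "Av c h N v = (\<lambda>z. (1 / real N) *\<^sub>R (\<lambda>z. \<Sum>k<N. v (z + (real k * h, c * (real k * h)))) z)"
  by (rule ext) (simp add: Av_def)

lemma Av_W: "v \<in> W_space b c \<Longrightarrow> Av c h N v \<in> W_space b c"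
  unfolding Av_eq by (intro W_scale W_sum W_shift)

lemma Sigma_pi:
  assumes "f \<in> W_space b c" "c \<noteq> 0"
  shows "(\<lambda>z. f (0, snd z - c * fst z)) \<in> Sigma_space b c"
proof -
  have p1: "f (y + (0,b)) = f y" for y using assms(1) unfolding W_iff torus_dp_iff dp_def by blast
  have C: "C1_map f" using assms(1) unfolding W_iff by blast
  have tp: "torus_periodic b c (\<lambda>z. f (0, snd z - c * fst z))"
    unfolding torus_periodic_def
  proof (intro allI conjI)
    fix t x :: real
    have "(0::real, x - c * (t + b / c)) = (0, x - c * t) - (0, b)" using assms(2) by (simp add: algebra_simps)
    then have "f (0, x - c * (t + b / c)) = f (0, x - c * t)"
      using periodic_neg[of f "(0,b)", OF p1, of "(0, x - c*t)"] by metis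
    then show "f (0, snd (t + b / c, x) - c * fst (t + b / c, x)) = f (0, snd (t, x) - c * fst (t, x))"
      by simp
    have "(0::real, x + b - c * t) = (0, x - c * t) + (0, b)" by simp
    then have "f (0, x + b - c * t) = f (0, x - c * t)"
      using p1[of "(0, x - c*t)"] by metis
    then show "f (0, snd (t, x + b) - c * fst (t, x + b)) = f (0, snd (t, x) - c * fst (t, x))"
      by simp
  qed
  have inv: "\<forall>s t x. (\<lambda>z. f (0, snd z - c * fst z)) (t + s, x + c * s) = (\<lambda>z. f (0, snd z - c * fst z)) (t, x)"
    by (simp add: algebra_simps)
  show ?thesis unfolding Sigma_space_def using tp C1_pi[OF C, of c] inv by (simp add: W_iff)
qed

lemma orbit_period:
  assumes "dp (b/c) b f" "c \<noteq> 0" "N > 0"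
  shows "f (y + (real N * (b/c/real N), c * (real N * (b/c/real N)))) = f y"
proof -
  have p1: "f (y + (b/c,0)) = f y" and p2: "f (y + (0,b)) = f y" for y using assms(1) unfolding dp_def by blast+
  have e1: "real N * (b/c/real N) = b/c" using assms(3) by simp
  have e2: "c * (b/c) = b" using assms(2) by simp
  have "y + (real N * (b/c/real N), c * (real N * (b/c/real N))) = (y + (b/c,0)) + (0,b)"
    unfolding e1 e2 by simp
  then have "f (y + (real N * (b/c/real N), c * (real N * (b/c/real N)))) = f ((y + (b/c,0)) + (0,b))"
    by (rule arg_cong[where f=f])
  also have "\<dots> = f y" using p1 p2 by simp
  finally show ?thesis .
qed

lemma Av_orbit_close:
  fixes f :: "real \<times> real \<Rightarrow> 'b::real_normed_vector"
  assumes per: "\<And>y. f (y + (real N * h, c * (real N * h))) = f y"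
    and uc: "\<And>y r. \<bar>r\<bar> \<le> \<delta> \<Longrightarrow> norm (f (y + (r, c * r)) - f y) \<le> \<epsilon>"
    and h: "\<bar>h\<bar> \<le> \<delta>" "h \<noteq> 0" and N: "N > 0"
  shows "norm (Av c h N f (z + (s, c * s)) - Av c h N f z) \<le> \<epsilon>"
proof -
  define m where "m = \<lfloor>s / h\<rfloor>"
  define r where "r = s - of_int m * h"
  have fl: "of_int m \<le> s / h" "s / h < of_int m + 1" unfolding m_def by linarith+
  have "r = h * (s / h - of_int m)" unfolding r_def using h(2) by (simp add: algebra_simps)
  then have "\<bar>r\<bar> = \<bar>h\<bar> * (s / h - of_int m)" using fl by (simp add: abs_mult)
  also have "\<dots> \<le> \<bar>h\<bar> * 1" using fl by (intro mult_left_mono) auto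
  finally have r: "\<bar>r\<bar> \<le> \<delta>" using h by simp
  define Y where "Y = z + (of_int m * h, c * (of_int m * h))"
  have zY: "z + (s, c * s) = Y + (r, c * r)" unfolding Y_def r_def by (simp add: algebra_simps)
  have "norm (Av c h N f (Y + (r, c * r)) - Av c h N f Y) \<le> \<epsilon>"
    by (rule Av_close[OF N]) (rule uc[OF r])
  moreover have "Av c h N f Y = Av c h N f z" unfolding Y_def by (rule Av_int_inv[where f=f and N=N and h=h and c=c, OF per])
  ultimately show ?thesis using zY by simp
qed



lemma orbit_deriv_small:
  fixes v :: "real \<times> real \<Rightarrow> real ^ 'd"
  assumes D: "\<And>z. (v has_derivative D z) (at z)"
    and per: "\<And>y. v (y + (real N * h, c * (real N * h))) = v y"
    and close2: "\<And>y s. \<bar>s\<bar> \<le> \<bar>h\<bar> \<Longrightarrow>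
        norm (Av c h N (\<lambda>y. D y (1,c)) (y + (s, c * s)) - Av c h N (\<lambda>y. D y (1,c)) y) \<le> \<epsilon>"
    and h: "h \<noteq> 0"
  shows "norm (Av c h N (\<lambda>y. D y (1,c)) z) \<le> \<epsilon>"
proof -
  define A2 where "A2 = Av c h N (\<lambda>y. D y (1,c))"
  define g where "g s = Av c h N v (z + (s, c * s))" for s
  have lin: "D y (d, c * d) = d *\<^sub>R D y (1,c)" for y d
    using deriv_lin[OF D[of y], of d "c * d"] deriv_lin[OF D[of y], of 1 c] by (simp add: algebra_simps)
  have dg: "(g has_derivative (\<lambda>d. d *\<^sub>R A2 (z + (s, c * s)))) (at s)" for s
  proof -
    have path: "((\<lambda>s. z + (s, c * s)) has_derivative (\<lambda>d. (d, c * d))) (at s)"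
      by (auto intro!: derivative_eq_intros)
    have "((\<lambda>s. Av c h N v (z + (s, c * s))) has_derivative
        (\<lambda>d. Av c h N (\<lambda>y. D y (d, c * d)) (z + (s, c * s)))) (at s)"
      using has_derivative_compose[OF path Av_deriv[OF D, of c h N "z + (s, c * s)"]] by simp
    moreover have "Av c h N (\<lambda>y. D y (d, c * d)) Y = d *\<^sub>R A2 Y" for d Y
      unfolding A2_def lin by (rule Av_scale)
    ultimately show ?thesis unfolding g_def by simp
  qed
  define phi where "phi s = g s - s *\<^sub>R A2 z" for s
  have dphi: "(phi has_derivative (\<lambda>d. d *\<^sub>R A2 (z + (s, c * s)) - d *\<^sub>R A2 z)) (at s)" for s
    unfolding phi_def by (auto intro!: derivative_eq_intros dg)
  define H where "H = \<bar>h\<bar>"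
  have H: "H > 0" using h unfolding H_def by simp
  have gH: "g H = g 0"
  proof -
    define m :: int where "m = (if h \<ge> 0 then 1 else -1)"
    have "of_int m * h = H" unfolding m_def H_def by auto
    then have "g H = Av c h N v (z + (of_int m * h, c * (of_int m * h)))" unfolding g_def by simp
    also have "\<dots> = Av c h N v z" by (rule Av_int_inv[where f=v and N=N and h=h and c=c, OF per])
    also have "\<dots> = g 0" unfolding g_def by (simp flip: zero_prod_def)
    finally show ?thesis .
  qed
  have cphi: "continuous_on {0..H} phi"
    by (rule continuous_at_imp_continuous_on) (use has_derivative_continuous[OF dphi] in blast)
  obtain s where s: "s \<in> {0<..<H}" "norm (phi H - phi 0) \<le> norm (H *\<^sub>R A2 (z + (s, c * s)) - H *\<^sub>R A2 z)"
    using mvt_general[OF H cphi dphi] by auto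
  have "norm (H *\<^sub>R A2 (z + (s, c * s)) - H *\<^sub>R A2 z) = H * norm (A2 (z + (s, c * s)) - A2 z)"
    using H by (simp add: scaleR_diff_right[symmetric])
  also have "\<dots> \<le> H * \<epsilon>" using close2[of s z] s(1) H unfolding A2_def H_def by (intro mult_left_mono) auto
  finally have 1: "norm (phi H - phi 0) \<le> H * \<epsilon>" using s(2) by linarith
  have "phi H - phi 0 = - (H *\<^sub>R A2 z)" unfolding phi_def using gH by simp
  then have "norm (phi H - phi 0) = H * norm (A2 z)" using H by simp
  with 1 have "H * norm (A2 z) \<le> H * \<epsilon>" by simp
  then show ?thesis using H unfolding A2_def by simp
qed



lemma approx_main:
  fixes v :: "real \<times> real \<Rightarrow> real ^ 'd"
  assumes v: "v \<in> W_space b c" and b: "b > 0" and c: "c \<noteq> 0" and e: "e > 0"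
  shows "\<exists>N>0. 0 \<le> C1_norm (\<lambda>z. Av c (b/c/real N) N v z - Av c (b/c/real N) N v (0, snd z - c * fst z))
        \<and> C1_norm (\<lambda>z. Av c (b/c/real N) N v z - Av c (b/c/real N) N v (0, snd z - c * fst z)) \<le> 3 * e"
proof -
  obtain D where D1: "\<And>z. (v has_derivative D z) (at z)" and D2: "\<And>k. continuous_on UNIV (\<lambda>z. D z k)"
    and dv: "dp (b/c) b v" using W_data[OF v] by metis
  define q where "q = \<bar>b/c\<bar>"
  have q: "q > 0" using b c unfolding q_def by simp
  define f1 where "f1 = (\<lambda>y. D y (0,1))"
  define f2 where "f2 = (\<lambda>y. D y (1,c))"
  have df1: "dp (b/c) b f1" unfolding f1_def by (rule deriv_dp[OF D1 dv])
  have df2: "dp (b/c) b f2" unfolding f2_def by (rule deriv_dp[OF D1 dv])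
  have cv: "continuous_on UNIV v"
    by (rule continuous_at_imp_continuous_on) (use has_derivative_continuous[OF D1] in blast)
  define e1 where "e1 = e / (2 * (1 + \<bar>c\<bar>))"
  define e2 where "e2 = e / 2"
  have e1: "e1 > 0" unfolding e1_def using e by (simp add: add_pos_nonneg)
  have e2: "e2 > 0" unfolding e2_def using e by simp
  obtain \<delta>0 where \<delta>0: "\<delta>0 > 0" "\<forall>y r. \<bar>r\<bar> \<le> \<delta>0 \<longrightarrow> norm (v (y + (r, c*r)) - v y) \<le> e"
    using orbit_uc[OF dp_abs[OF dv] q[unfolded q_def] b cv, of c] e by blast
  obtain \<delta>1 where \<delta>1: "\<delta>1 > 0" "\<forall>y r. \<bar>r\<bar> \<le> \<delta>1 \<longrightarrow> norm (f1 (y + (r, c*r)) - f1 y) \<le> e1"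
    using orbit_uc[OF dp_abs[OF df1] q[unfolded q_def] b, of c] D2 e1 unfolding f1_def by blast
  obtain \<delta>2 where \<delta>2: "\<delta>2 > 0" "\<forall>y r. \<bar>r\<bar> \<le> \<delta>2 \<longrightarrow> norm (f2 (y + (r, c*r)) - f2 y) \<le> e2"
    using orbit_uc[OF dp_abs[OF df2] q[unfolded q_def] b, of c] D2 e2 unfolding f2_def by blast
  define \<delta> where "\<delta> = min \<delta>0 (min \<delta>1 \<delta>2)"
  have \<delta>: "\<delta> > 0" unfolding \<delta>_def using \<delta>0 \<delta>1 \<delta>2 by simp
  define N where "N = nat \<lceil>q / \<delta>\<rceil> + 1"
  have N: "N > 0" unfolding N_def by simp
  have "q / \<delta> \<le> real N" unfolding N_def by linarith
  then have "q \<le> \<delta> * real N" using \<delta> by (simp add: field_simps)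
  then have qN: "q / real N \<le> \<delta>" using N by (simp add: field_simps)
  define h where "h = b/c/real N"
  have habs: "\<bar>h\<bar> = q / real N" unfolding h_def q_def by (simp add: abs_mult)
  have h\<delta>: "\<bar>h\<bar> \<le> \<delta>" using habs qN by simp
  have h0: "h \<noteq> 0" unfolding h_def using b c N by simp
  have per0: "\<And>y. v (y + (real N * h, c * (real N * h))) = v y"
    unfolding h_def by (rule orbit_period[OF dv c N])
  have per1: "\<And>y. f1 (y + (real N * h, c * (real N * h))) = f1 y"
    unfolding h_def by (rule orbit_period[OF df1 c N])
  have per2: "\<And>y. f2 (y + (real N * h, c * (real N * h))) = f2 y"
    unfolding h_def by (rule orbit_period[OF df2 c N])
  have close0: "norm (Av c h N v (z + (s, c * s)) - Av c h N v z) \<le> e" for z s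
    by (rule Av_orbit_close[where f=v and N=N and h=h and c=c, OF per0 _ h\<delta> h0 N]) (use \<delta>0 \<delta>_def in auto)
  have close1: "norm (Av c h N f1 (z + (s, c * s)) - Av c h N f1 z) \<le> e1" for z s
    by (rule Av_orbit_close[where f=f1 and N=N and h=h and c=c, OF per1 _ h\<delta> h0 N]) (use \<delta>1 \<delta>_def in auto)
  have close2: "norm (Av c h N f2 (z + (s, c * s)) - Av c h N f2 z) \<le> e2" for z s
    by (rule Av_orbit_close[where f=f2 and N=N and h=h and c=c, OF per2 _ h\<delta> h0 N]) (use \<delta>2 \<delta>_def in auto)
  have small2: "norm (Av c h N f2 z) \<le> e2" for z
    using orbit_deriv_small[OF D1 per0 _ h0, of e2 z] close2 unfolding f2_def by blast
  define pi :: "real \<times> real \<Rightarrow> real \<times> real" where "pi z = (0, snd z - c * fst z)" for z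
  have pi_eq: "pi z = z + (- fst z, c * (- fst z))" for z unfolding pi_def by (cases z) simp
  have dpi: "(pi has_derivative pi) (at z)" for z unfolding pi_def by (auto intro!: derivative_eq_intros)
  define hN where "hN z = Av c h N v z - Av c h N v (pi z)" for z
  have dA: "(Av c h N v has_derivative (\<lambda>k. Av c h N (\<lambda>y. D y k) z)) (at z)" for z
    by (rule Av_deriv[OF D1])
  have dw: "((\<lambda>z. Av c h N v (pi z)) has_derivative (\<lambda>k. Av c h N (\<lambda>y. D y (pi k)) (pi z))) (at z)" for z
    using has_derivative_compose[OF dpi dA] by simp
  have dh: "(hN has_derivative (\<lambda>k. Av c h N (\<lambda>y. D y k) z - Av c h N (\<lambda>y. D y (pi k)) (pi z))) (at z)" for z
    unfolding hN_def by (rule has_derivative_diff[OF dA dw])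
  have fr: "frechet_derivative hN (at z) = (\<lambda>k. Av c h N (\<lambda>y. D y k) z - Av c h N (\<lambda>y. D y (pi k)) (pi z))" for z
    using frechet_derivative_at[OF dh[of z]] by simp
  have l10: "(\<lambda>y. D y (1,0)) = (\<lambda>y. f2 y - c *\<^sub>R f1 y)"
  proof (rule ext)
    fix y show "D y (1,0) = f2 y - c *\<^sub>R f1 y"
      using deriv_lin[OF D1[of y], of 1 c] unfolding f1_def f2_def by simp
  qed
  have l0c: "(\<lambda>y. D y (pi (1,0))) = (\<lambda>y. (-c) *\<^sub>R f1 y)"
  proof (rule ext)
    fix y show "D y (pi (1,0)) = (-c) *\<^sub>R f1 y"
      using deriv_lin[OF D1[of y], of 0 "-c"] unfolding f1_def pi_def by simp
  qed
  have l01: "(\<lambda>y. D y (pi (0,1))) = f1" unfolding f1_def pi_def by simp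
  have b0: "norm (hN z) \<le> e" for z
  proof -
    have "norm (hN z) = norm (Av c h N v (z + (- fst z, c * (- fst z))) - Av c h N v z)"
      unfolding hN_def pi_eq by (simp add: norm_minus_commute)
    also have "\<dots> \<le> e" by (rule close0)
    finally show ?thesis .
  qed
  have c1: "norm (Av c h N f1 z - Av c h N f1 (pi z)) \<le> e1" for z
    unfolding pi_eq using close1[of z "- fst z"] by (simp add: norm_minus_commute)
  have b01: "norm (frechet_derivative hN (at z) (0,1)) \<le> e" for z
  proof -
    have "norm (frechet_derivative hN (at z) (0,1)) = norm (Av c h N f1 z - Av c h N f1 (pi z))"
      unfolding fr l01 by (simp add: f1_def)
    also have "\<dots> \<le> e1" by (rule c1)
    also have "e1 \<le> e" unfolding e1_def using e by (simp add: field_simps)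
    finally show ?thesis .
  qed
  have b10: "norm (frechet_derivative hN (at z) (1,0)) \<le> e" for z
  proof -
    have "frechet_derivative hN (at z) (1,0) = Av c h N (\<lambda>y. f2 y - c *\<^sub>R f1 y) z - Av c h N (\<lambda>y. (-c) *\<^sub>R f1 y) (pi z)"
      unfolding fr l10 l0c by simp
    also have "\<dots> = Av c h N f2 z - c *\<^sub>R (Av c h N f1 z - Av c h N f1 (pi z))"
      unfolding Av_lin Av_scale by (simp add: algebra_simps)
    finally have "norm (frechet_derivative hN (at z) (1,0)) \<le> norm (Av c h N f2 z) + \<bar>c\<bar> * norm (Av c h N f1 z - Av c h N f1 (pi z))"
      using norm_triangle_ineq4 by (metis norm_scaleR)
    also have "\<dots> \<le> e2 + \<bar>c\<bar> * e1" using small2[of z] c1[of z] by (intro add_mono mult_left_mono) auto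
    also have "\<dots> \<le> e"
    proof -
      have "\<bar>c\<bar> * e1 \<le> e / 2" unfolding e1_def using e by (simp add: field_simps)
      then show ?thesis unfolding e2_def by simp
    qed
    finally show ?thesis .
  qed
  have hN_eq: "(\<lambda>z. Av c (b/c/real N) N v z - Av c (b/c/real N) N v (0, snd z - c * fst z)) = hN"
    unfolding hN_def h_def pi_def by simp
  show ?thesis
    by (rule exI[of _ N]) (use N C1_norm_bound[of hN e, OF b0 b10 b01] hN_eq in simp)
qed



lemma C1_norm_nonneg:
  assumes "v \<in> W_space b c" "b > 0" "c \<noteq> 0"
  shows "C1_norm v \<ge> 0"
proof -
  have g: "0 \<le> Sup (range g)" if "bdd_above (range g)" "\<And>z. 0 \<le> g z" for g :: "real \<times> real \<Rightarrow> real"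
    using cSup_upper[OF _ that(1), of "g 0"] that(2)[of 0] by simp
  show ?thesis unfolding C1_norm_def
    using g[OF W_bdd(1)[OF assms]] g[OF W_bdd(2)[OF assms, of "(1,0)"]] g[OF W_bdd(2)[OF assms, of "(0,1)"]]
    by simp
qed

theorem proposition4:
  fixes c b dt dx :: real
    and L :: "real ^ 'd \<Rightarrow> real ^ 'd \<Rightarrow> real ^ 'd \<Rightarrow> real"
    and u :: "real \<times> real \<Rightarrow> real ^ 'd"
  assumes "c \<noteq> 0" and "b > 0" and "dt > 0" and "dx > 0"
    and "C1_functional_on (W_space b c) (discrete_action b c dt dx L)"
    and "u \<in> Sigma_space b c"
  shows "stationary_wrt (W_space b c) (discrete_action b c dt dx L) u \<longleftrightarrow>
         stationary_wrt (Sigma_space b c) (discrete_action b c dt dx L) u"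
proof
  have SW: "Sigma_space b c \<subseteq> W_space b c" unfolding Sigma_space_def by blast
  show "stationary_wrt (W_space b c) (discrete_action b c dt dx L) u \<Longrightarrow>
         stationary_wrt (Sigma_space b c) (discrete_action b c dt dx L) u"
    unfolding stationary_wrt_def using SW by blast
next
  assume st: "stationary_wrt (Sigma_space b c) (discrete_action b c dt dx L) u"
  define S where "S = discrete_action b c dt dx L"
  define W :: "(real \<times> real \<Rightarrow> real ^ 'd) set" where "W = W_space b c"
  have c: "c \<noteq> 0" and b: "b > 0" using assms by auto
  have SW: "Sigma_space b c \<subseteq> W_space b c" unfolding Sigma_space_def by blast
  have uW: "u \<in> W" using assms(6) unfolding Sigma_space_def W_def by blast
  have uinv: "u (z + (s, c * s)) = u z" for z s
    using assms(6) unfolding Sigma_space_def by (cases z) auto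
  obtain DS where
    lin: "\<forall>u\<in>W. (\<forall>h\<in>W. \<forall>k\<in>W. DS u (\<lambda>z. h z + k z) = DS u h + DS u k) \<and>
               (\<forall>h\<in>W. \<forall>r. DS u (\<lambda>z. r *\<^sub>R h z) = r * DS u h) \<and>
               (\<exists>K. \<forall>h\<in>W. \<bar>DS u h\<bar> \<le> K * C1_norm h)"
    and approx: "\<forall>u\<in>W. \<forall>e>0. \<exists>\<delta>>0. \<forall>h\<in>W. C1_norm h < \<delta> \<longrightarrow>
               \<bar>S (\<lambda>z. u z + h z) - S u - DS u h\<bar> \<le> e * C1_norm h"
    using assms(5) unfolding C1_functional_on_def S_def W_def by blast
  define T where "T = DS u"
  have add: "T (\<lambda>z. f z + g z) = T f + T g" if "f \<in> W" "g \<in> W" for f g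
    using lin uW that unfolding T_def by blast
  have scl: "T (\<lambda>z. r *\<^sub>R f z) = r * T f" if "f \<in> W" for f r
    using lin uW that unfolding T_def by blast
  obtain K where K: "\<And>f. f \<in> W \<Longrightarrow> \<bar>T f\<bar> \<le> K * C1_norm f"
    using lin uW unfolding T_def by blast
  have deriv: "((\<lambda>\<epsilon>. S (\<lambda>z. u z + \<epsilon> *\<^sub>R v z)) has_real_derivative T v) (at 0)" if v: "v \<in> W" for v
    unfolding T_def
  proof (rule deriv_formula[where V=W])
    show "\<forall>e>0. \<exists>\<delta>>0. \<forall>h\<in>W. C1_norm h < \<delta> \<longrightarrow> \<bar>S (\<lambda>z. u z + h z) - S u - DS u h\<bar> \<le> e * C1_norm h"
      using approx uW by blast
    show "\<forall>h\<in>W. \<forall>r. DS u (\<lambda>z. r *\<^sub>R h z) = r * DS u h" using lin uW by blast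
    show "v \<in> W" by (rule v)
    show "(\<lambda>z. r *\<^sub>R v z) \<in> W" for r using W_scale v unfolding W_def by blast
    show "C1_norm (\<lambda>z. r *\<^sub>R v z) = \<bar>r\<bar> * C1_norm v" for r using C1_norm_scale v b c unfolding W_def by blast
    show "C1_norm v \<ge> 0" using C1_norm_nonneg v b c unfolding W_def by blast
  qed
  have zeroS: "T w = 0" if w: "w \<in> Sigma_space b c" for w
  proof -
    have "((\<lambda>\<epsilon>. S (\<lambda>z. u z + \<epsilon> *\<^sub>R w z)) has_real_derivative 0) (at 0)"
      using st w unfolding stationary_wrt_def S_def by blast
    moreover have "w \<in> W" using w SW unfolding W_def by blast
    ultimately show ?thesis using deriv DERIV_unique by blast
  qed
  have inv: "T (\<lambda>z. v (z + (s, c * s))) = T v" if v: "v \<in> W" for v s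
  proof -
    have vs: "(\<lambda>z. v (z + (s, c * s))) \<in> W" using W_shift v unfolding W_def by blast
    have "S (\<lambda>z. u z + \<epsilon> *\<^sub>R v (z + (s, c * s))) = S (\<lambda>z. u z + \<epsilon> *\<^sub>R v z)" for \<epsilon>
    proof -
      define w where "w = (\<lambda>z. u z + \<epsilon> *\<^sub>R v z)"
      have "w \<in> W" unfolding w_def W_def using W_add W_scale uW v unfolding W_def by blast
      then have tw: "torus_periodic b c w" unfolding W_def W_iff by blast
      have "(\<lambda>z. u z + \<epsilon> *\<^sub>R v (z + (s, c * s))) = (\<lambda>z. w (z + (s, c * s)))"
        unfolding w_def using uinv by simp
      then show ?thesis using action_shift[OF tw c b, of dt dx L "(s, c * s)"] unfolding S_def w_def by simp
    qed
    then have "((\<lambda>\<epsilon>. S (\<lambda>z. u z + \<epsilon> *\<^sub>R v (z + (s, c * s)))) has_real_derivative T v) (at 0)"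
      using deriv[OF v] by simp
    then show ?thesis using deriv[OF vs] DERIV_unique by blast
  qed
  have sum: "T (\<lambda>z. \<Sum>k<n. g k z) = (\<Sum>k<n. T (g k))" if g: "\<And>k. g k \<in> W" for g and n :: nat
  proof (induction n)
    case 0
    have "(\<lambda>z. 0::real ^ 'd) \<in> W" using W_zero unfolding W_def by blast
    then have "T (\<lambda>z. (0::real) *\<^sub>R (0::real ^ 'd)) = 0 * T (\<lambda>z. 0)" by (rule scl)
    then show ?case by simp
  next
    case (Suc n)
    have "(\<lambda>z. \<Sum>k<n. g k z) \<in> W" using W_sum g unfolding W_def by blast
    then have "T (\<lambda>z. (\<Sum>k<n. g k z) + g n z) = T (\<lambda>z. \<Sum>k<n. g k z) + T (g n)"
      using add[of "\<lambda>z. \<Sum>k<n. g k z" "g n"] g by simp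
    then show ?case using Suc.IH by simp
  qed
  have avg: "T (Av c h N v) = T v" if v: "v \<in> W" and N: "N > 0" for v h N
  proof -
    have ss: "(\<lambda>z. \<Sum>k<N. v (z + (real k * h, c * (real k * h)))) \<in> W"
      unfolding W_def by (rule W_sum) (rule W_shift[OF v[unfolded W_def]])
    have "T (Av c h N v) = (1 / real N) * T (\<lambda>z. \<Sum>k<N. v (z + (real k * h, c * (real k * h))))"
      unfolding Av_eq by (rule scl[OF ss])
    also have "T (\<lambda>z. \<Sum>k<N. v (z + (real k * h, c * (real k * h)))) = (\<Sum>k<N. T (\<lambda>z. v (z + (real k * h, c * (real k * h)))))"
      by (rule sum) (unfold W_def, rule W_shift[OF v[unfolded W_def]])
    also have "\<dots> = (\<Sum>k<N. T v)" using inv[OF v] by simp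
    finally show ?thesis using N by simp
  qed
  show "stationary_wrt (W_space b c) (discrete_action b c dt dx L) u"
    unfolding stationary_wrt_def
  proof
    fix v :: "real \<times> real \<Rightarrow> real ^ 'd" assume vW0: "v \<in> W_space b c"
    then have vW: "v \<in> W" unfolding W_def .
    define M where "M = max K 0"
    have bound: "\<bar>T v\<bar> \<le> M * (3 * e)" if e: "e > 0" for e
    proof -
      obtain N where N: "N > 0" and
        C: "0 \<le> C1_norm (\<lambda>z. Av c (b/c/real N) N v z - Av c (b/c/real N) N v (0, snd z - c * fst z))"
           "C1_norm (\<lambda>z. Av c (b/c/real N) N v z - Av c (b/c/real N) N v (0, snd z - c * fst z)) \<le> 3 * e"
        using approx_main[OF vW0 b c e] by blast
      define A where "A = Av c (b/c/real N) N v"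
      define w where "w = (\<lambda>z. A (0, snd z - c * fst z))"
      have AW: "A \<in> W" unfolding A_def W_def using Av_W vW0 by blast
      have wS: "w \<in> Sigma_space b c" unfolding w_def using Sigma_pi[OF AW[unfolded W_def] c] .
      have wW: "w \<in> W" using wS SW unfolding W_def by blast
      have mw: "(\<lambda>z. (-1) *\<^sub>R w z) \<in> W" using W_scale wW unfolding W_def by blast
      define hN where "hN = (\<lambda>z. A z - w z)"
      have hW: "hN \<in> W" unfolding hN_def using W_add[OF AW[unfolded W_def] mw[unfolded W_def]] W_def by simp
      have "T hN = T A + T (\<lambda>z. (-1) *\<^sub>R w z)"
        unfolding hN_def using add[OF AW mw] by simp
      also have "\<dots> = T v - T w" using scl[OF wW, of "-1"] avg[OF vW N] unfolding A_def by simp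
      also have "\<dots> = T v" using zeroS[OF wS] by simp
      finally have Tv: "T v = T hN" by simp
      have Ch: "0 \<le> C1_norm hN" "C1_norm hN \<le> 3 * e" using C unfolding hN_def w_def A_def by auto
      have "\<bar>T hN\<bar> \<le> K * C1_norm hN" by (rule K[OF hW])
      also have "\<dots> \<le> M * C1_norm hN" unfolding M_def using Ch by (intro mult_right_mono) auto
      also have "\<dots> \<le> M * (3 * e)" unfolding M_def using Ch by (intro mult_left_mono) auto
      finally show ?thesis using Tv by simp
    qed
    have T0: "T v = 0"
    proof (rule ccontr)
      assume "T v \<noteq> 0"
      then have d: "\<bar>T v\<bar> > 0" by simp
      have M: "M \<ge> 0" unfolding M_def by simp
      define e where "e = \<bar>T v\<bar> / (6 * (M + 1))"
      have e: "e > 0" unfolding e_def using d M by simp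
      have "M * (3 * e) = \<bar>T v\<bar> * (M / (2 * (M + 1)))" unfolding e_def using M by (simp add: field_simps)
      also have "\<dots> < \<bar>T v\<bar> * 1"
        using d M by (intro mult_strict_left_mono) (auto simp: field_simps)
      finally show False using bound[OF e] by simp
    qed
    show "((\<lambda>\<epsilon>. discrete_action b c dt dx L (\<lambda>z. u z + \<epsilon> *\<^sub>R v z)) has_real_derivative 0) (at 0)"
      using deriv[OF vW] T0 unfolding S_def by simp
  qed
qed

end
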